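(* Let $F$ be a field, let $X$ be a topological space and let $X_1, X_2 \subseteq X$ be subspaces with $\mathrm{cl}_X(X_1) \cap \mathrm{cl}_X(X_2) = \emptyset$. Let $q \geq 0$ be an integer, and assume the singular homology groups $H_q(X_1;F)$, $H_q(X_2;F)$, $H_q(X;F)$ are finite-dimensional. Let $\rho_i : H_q(X_i;F) \to H_q(X;F)$ ($i=1,2$) be induced by the inclusions, and let $\Gamma = \{ (s_1,s_2) \in H_q(X_1;F) \oplus H_q(X_2;F) : \rho_1(s_1) = \rho_2(s_2) \}$. Consider the persistent homology $\mathcal{P}_q(\mathcal{G}_1) : 0 \to H_q(X_1;F) \to H_q(X_1 \cup X_2;F) \to H_q(X;F)$ of the filtration $\mathcal{G}_1 : \emptyset \subseteq X_1 \subseteq X_1 \cup X_2 \subseteq X$ (indexed $0,1,2,3$, maps induced by inclusions). Then the number of barcodes $(3,+\infty)$ in $\mathcal{P}_q(\mathcal{G}_1)$ equals $$\dim_F H_q(X;F) - \dim_F H_q(X_1;F) - \dim_F H_q(X_2;F) + \dim_F \Gamma.$$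
   Context: Homology is singular homology with coefficients in $F$. For a filtration $\emptyset = Y_0 \subseteq Y_1 \subseteq \cdots \subseteq Y_n$, $\rho_{i,j} : H_q(Y_i;F) \to H_q(Y_j;F)$ denotes the map induced by inclusion. An element $s \in H_q(Y_i;F)$ is born at $i$ if $s \notin \operatorname{im}(\rho_{i-1,i})$; it dies at $j$ if $\rho_{i,j-1}(s) \notin \operatorname{im}(\rho_{i-1,j-1})$ and $\rho_{i,j}(s) \in \operatorname{im}(\rho_{i-1,j})$, and its death is $+\infty$ if it is still alive at $n$. The pair (birth, death) is its persistence barcode; the barcodes of the persistent homology form a multiset (the interval decomposition of the persistence module), and "the number of barcodes $(3,+\infty)$" is the multiplicity of the bar born at index $3$ that never dies. *)

theory Defs
  imports "HOL-Homology.Homology" "HOL-Library.Function_Algebras" "HOL-Library.Product_Plus"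
begin

text \<open>Singular chains with coefficients in a field 'f: finitely supported functions from
singular simplices to 'f, with pointwise vector space operations.\<close>

type_synonym ('a,'f) fchain = "((nat \<Rightarrow> real) \<Rightarrow> 'a) \<Rightarrow> 'f"

definition fscale :: "'f::field \<Rightarrow> ('a,'f) fchain \<Rightarrow> ('a,'f) fchain"
  where "fscale r c = (\<lambda>\<sigma>. r * c \<sigma>)"

definition pscale :: "'f::field \<Rightarrow> ('a,'f) fchain \<times> ('a,'f) fchain \<Rightarrow> ('a,'f) fchain \<times> ('a,'f) fchain"
  where "pscale r v = (fscale r (fst v), fscale r (snd v))"

definition fsingular_chain :: "nat \<Rightarrow> 'a topology \<Rightarrow> ('a,'f::field) fchain \<Rightarrow> bool"
  where "fsingular_chain p X c \<longleftrightarrow>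
           finite {\<sigma>. c \<sigma> \<noteq> 0} \<and> (\<forall>\<sigma>. c \<sigma> \<noteq> 0 \<longrightarrow> singular_simplex p X \<sigma>)"

definition fchain_boundary :: "nat \<Rightarrow> ('a,'f::field) fchain \<Rightarrow> ('a,'f) fchain"
  where "fchain_boundary p c =
    (if p = 0 then 0 else
      (\<lambda>\<tau>. \<Sum>\<sigma>\<in>{\<sigma>. c \<sigma> \<noteq> 0}. c \<sigma> * (\<Sum>k\<le>p. if singular_face p k \<sigma> = \<tau> then (-1) ^ k else 0)))"

definition fcycles :: "nat \<Rightarrow> 'a topology \<Rightarrow> ('a,'f::field) fchain set"
  where "fcycles p X = {c. fsingular_chain p X c \<and> fchain_boundary p c = 0}"

definition fboundaries :: "nat \<Rightarrow> 'a topology \<Rightarrow> ('a,'f::field) fchain set"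
  where "fboundaries p X = fchain_boundary (Suc p) ` {c. fsingular_chain (Suc p) X c}"

text \<open>Dimension of a quotient U/W of subspaces (W \<subseteq> U) of a vector space with scaling s:
the least size of a finite subset of U that spans U modulo W.\<close>

definition fin_dim_quot :: "('f::field \<Rightarrow> 'v::ab_group_add \<Rightarrow> 'v) \<Rightarrow> 'v set \<Rightarrow> 'v set \<Rightarrow> bool"
  where "fin_dim_quot s U W \<longleftrightarrow> (\<exists>B. finite B \<and> B \<subseteq> U \<and> U \<subseteq> module.span s (B \<union> W))"

definition dim_quot :: "('f::field \<Rightarrow> 'v::ab_group_add \<Rightarrow> 'v) \<Rightarrow> 'v set \<Rightarrow> 'v set \<Rightarrow> nat"
  where "dim_quot s U W =
    (LEAST n. \<exists>B. finite B \<and> card B = n \<and> B \<subseteq> U \<and> U \<subseteq> module.span s (B \<union> W))"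

text \<open>H_q(Y;F) = Z_q(Y)/B_q(Y) for the subspace Y of X.\<close>

definition fhomology_findim :: "'f::field itself \<Rightarrow> nat \<Rightarrow> 'a topology \<Rightarrow> 'a set \<Rightarrow> bool"
  where "fhomology_findim F q X Y \<longleftrightarrow>
     fin_dim_quot (fscale :: 'f \<Rightarrow> _) (fcycles q (subtopology X Y)) (fboundaries q (subtopology X Y))"

definition fhomology_dim :: "'f::field itself \<Rightarrow> nat \<Rightarrow> 'a topology \<Rightarrow> 'a set \<Rightarrow> nat"
  where "fhomology_dim F q X Y =
     dim_quot (fscale :: 'f \<Rightarrow> _) (fcycles q (subtopology X Y)) (fboundaries q (subtopology X Y))"

text \<open>Image of rho_{Y,Y'} : H_q(Y;F) \<rightarrow> H_q(Y';F) (Y \<subseteq> Y'), as the subspace of cycles of Y'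
  given by (Z_q(Y) + B_q(Y')); the image itself is this subspace modulo B_q(Y').\<close>

definition fimage_cycles :: "'f::field itself \<Rightarrow> nat \<Rightarrow> 'a topology \<Rightarrow> 'a set \<Rightarrow> 'a set \<Rightarrow> ('a,'f::field) fchain set"
  where "fimage_cycles F q X Y Y' =
     module.span (fscale :: 'f \<Rightarrow> _)
       (fcycles q (subtopology X Y) \<union> fboundaries q (subtopology X Y'))"

text \<open>Multiplicity of the bar (i,+\<infinity>) in the persistent homology P_q of a filtration
  Y 0 = {} \<subseteq> Y 1 \<subseteq> ... \<subseteq> Y n: the dimension of the classes of H_q(Y n) born at i and alive
  at n, i.e. of im rho_{i,n} / im rho_{i-1,n}.\<close>

definition bar_infty_mult :: "'f::field itself \<Rightarrow> nat \<Rightarrow> 'a topology \<Rightarrow> (nat \<Rightarrow> 'a set) \<Rightarrow> nat \<Rightarrow> nat \<Rightarrow> nat"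
  where "bar_infty_mult F q X Y n i =
     dim_quot (fscale :: 'f \<Rightarrow> _)
       (fimage_cycles F q X (Y i) (Y n))
       (fimage_cycles F q X (Y (i - 1)) (Y n))"

text \<open>Gamma = {(s1,s2) \<in> H_q(X1) \<oplus> H_q(X2). rho_1 s1 = rho_2 s2}, represented as the pairs of
  cycles (z1,z2) with z1 - z2 a boundary in X, modulo B_q(X1) \<times> B_q(X2).\<close>

definition gamma_dim :: "'f::field itself \<Rightarrow> nat \<Rightarrow> 'a topology \<Rightarrow> 'a set \<Rightarrow> 'a set \<Rightarrow> nat"
  where "gamma_dim F q X X1 X2 =
     dim_quot (pscale :: 'f \<Rightarrow> _)
       {(z1, z2). z1 \<in> fcycles q (subtopology X X1) \<and> z2 \<in> fcycles q (subtopology X X2)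
                  \<and> z1 - z2 \<in> fboundaries q X}
       (fboundaries q (subtopology X X1) \<times> fboundaries q (subtopology X X2))"

end

theory Submission
  imports Defs
begin


context vector_space begin

lemma indep_Un_span:
  assumes "independent A" "independent C" "span A \<inter> span C \<subseteq> {0}"
  shows "independent (A \<union> C)"
proof
  assume "dependent (A \<union> C)"
  then obtain T u v where T: "finite T" "T \<subseteq> A \<union> C" "(\<Sum>x\<in>T. scale (u x) x) = 0" "v \<in> T" "u v \<noteq> 0"
    unfolding dependent_explicit by blast
  let ?TA = "T \<inter> A" and ?TC = "T - A"
  have split: "(\<Sum>x\<in>T. scale (u x) x) = (\<Sum>x\<in>?TA. scale (u x) x) + (\<Sum>x\<in>?TC. scale (u x) x)"
    by (rule sum.Int_Diff[OF T(1)])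
  have a: "(\<Sum>x\<in>?TA. scale (u x) x) \<in> span A" by (intro span_sum span_scale span_base) auto
  have c: "(\<Sum>x\<in>?TC. scale (u x) x) \<in> span C" using T(2) by (intro span_sum span_scale span_base) auto
  have "(\<Sum>x\<in>?TA. scale (u x) x) = - (\<Sum>x\<in>?TC. scale (u x) x)" using split T(3)
    by (simp add: eq_neg_iff_add_eq_0)
  hence "(\<Sum>x\<in>?TA. scale (u x) x) \<in> span C" using c span_neg by simp
  hence A0: "(\<Sum>x\<in>?TA. scale (u x) x) = 0" using a assms(3) by blast
  hence C0: "(\<Sum>x\<in>?TC. scale (u x) x) = 0" using split T(3) by simp
  show False
  proof (cases "v \<in> A")
    case True then show False using independentD[OF assms(1), of ?TA u v] A0 T by auto
  next
    case False then show False using independentD[OF assms(2), of ?TC u v] C0 T by auto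
  qed
qed

lemma span_Int_indep:
  assumes "independent (A \<union> C)" "A \<inter> C = {}"
  shows "span A \<inter> span C \<subseteq> {0}"
proof
  fix x assume "x \<in> span A \<inter> span C"
  then obtain ta ra tc rc where a: "finite ta" "ta \<subseteq> A" "x = (\<Sum>a\<in>ta. scale (ra a) a)"
    and c: "finite tc" "tc \<subseteq> C" "x = (\<Sum>a\<in>tc. scale (rc a) a)"
    unfolding span_explicit by blast
  define u where "u v = (if v \<in> ta then ra v else - rc v)" for v
  have disj: "ta \<inter> tc = {}" using a c assms(2) by blast
  have "(\<Sum>v\<in>ta \<union> tc. scale (u v) v) = (\<Sum>v\<in>ta. scale (u v) v) + (\<Sum>v\<in>tc. scale (u v) v)"
    using sum.union_disjoint a c disj by blast
  also have "(\<Sum>v\<in>ta. scale (u v) v) = x" using a by (simp add: u_def)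
  also have "(\<Sum>v\<in>tc. scale (u v) v) = (\<Sum>v\<in>tc. - (scale (rc v) v))"
    using disj by (intro sum.cong) (auto simp: u_def)
  also have "\<dots> = - x" using c by (simp add: sum_negf)
  finally have 0: "(\<Sum>v\<in>ta \<union> tc. scale (u v) v) = 0" by simp
  have "\<forall>v\<in>ta. u v = 0" using independentD[OF assms(1) _ _ 0] a c by blast
  hence "\<forall>v\<in>ta. ra v = 0" by (simp add: u_def)
  then show "x \<in> {0}" using a by simp
qed

lemma span_finite_subset:
  assumes "x \<in> span S" obtains S0 where "finite S0" "S0 \<subseteq> S" "x \<in> span S0"
proof -
  from assms obtain t r where "finite t" "t \<subseteq> S" "x = (\<Sum>a\<in>t. scale (r a) a)"
    unfolding span_explicit by blast
  moreover have "(\<Sum>a\<in>t. scale (r a) a) \<in> span t" by (intro span_sum span_scale span_base)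
  ultimately show ?thesis using that by blast
qed

lemma bound_mod_finite:
  assumes W: "subspace W" and T: "finite T" and S: "finite S" "independent S" "span S \<inter> W \<subseteq> {0}"
    and sp: "S \<subseteq> span (T \<union> W)"
  shows "card S \<le> card T"
proof -
  obtain C where C: "C \<subseteq> W" "independent C" "W \<subseteq> span C"
    using maximal_independent_subset[of W] by blast
  have "span (T \<union> W) \<subseteq> span (T \<union> C)"
    by (intro span_minimal) (use C in \<open>auto intro: span_base span_mono[THEN subsetD, rotated]\<close>)
  hence "\<forall>s\<in>S. \<exists>X0. finite X0 \<and> X0 \<subseteq> T \<union> C \<and> s \<in> span X0"
    using sp by (metis span_finite_subset subsetD)
  then obtain g where g: "\<And>s. s \<in> S \<Longrightarrow> finite (g s) \<and> g s \<subseteq> T \<union> C \<and> s \<in> span (g s)"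
    by metis
  define C0 where "C0 = (\<Union>(g ` S)) \<inter> C"
  have fC0: "finite C0" using g S unfolding C0_def by auto
  have C0C: "C0 \<subseteq> C" by (auto simp: C0_def)
  have SC0: "S \<subseteq> span (T \<union> C0)"
  proof
    fix s assume "s \<in> S"
    with g have "g s \<subseteq> T \<union> C0" "s \<in> span (g s)" by (auto simp: C0_def)
    thus "s \<in> span (T \<union> C0)" using span_mono by blast
  qed
  have "span C0 \<subseteq> W" using C0C C W by (metis span_minimal order_trans)
  hence i: "independent (S \<union> C0)"
    using indep_Un_span[OF S(2) independent_mono[OF C(2) C0C]] S(3) by blast
  have d: "S \<inter> C0 = {}"
  proof -
    have "S \<inter> C0 \<subseteq> span S \<inter> W" using C0C C by (auto intro: span_base)
    hence "S \<inter> C0 \<subseteq> {0}" using S(3) by blast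
    moreover have "0 \<notin> S" using S(2) dependent_zero by blast
    ultimately show ?thesis by blast
  qed
  have "S \<union> C0 \<subseteq> span (T \<union> C0)" using SC0 by (auto intro: span_base)
  hence "card (S \<union> C0) \<le> card (T \<union> C0)"
    using independent_span_bound[OF _ i] T fC0 by blast
  also have "\<dots> \<le> card T + card C0" by (rule card_Un_le)
  finally show ?thesis using card_Un_disjoint[OF S(1) fC0 d] by simp
qed

lemma bound_mod:
  assumes W: "subspace W" and T: "finite T" and S: "independent S" "span S \<inter> W \<subseteq> {0}"
    and sp: "S \<subseteq> span (T \<union> W)"
  shows "finite S \<and> card S \<le> card T"
proof -
  have *: "card S' \<le> card T" if "S' \<subseteq> S" "finite S'" for S'
  proof (rule bound_mod_finite[OF W T that(2)])
    show "independent S'" using independent_mono[OF S(1) that(1)] .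
    show "span S' \<inter> W \<subseteq> {0}" using S(2) span_mono[OF that(1)] by blast
    show "S' \<subseteq> span (T \<union> W)" using sp that(1) by blast
  qed
  have "finite S"
  proof (rule ccontr)
    assume "infinite S"
    then obtain S' where S': "S' \<subseteq> S" "finite S'" "card S' = Suc (card T)"
      using infinite_arbitrarily_large by blast
    show False using *[OF S'(1,2)] S'(3) by simp
  qed
  then show ?thesis using *[OF subset_refl] by blast
qed

lemma extend_mod:
  assumes W: "subspace W" and N: "subspace N" "W \<subseteq> N" and T: "finite T" "N \<subseteq> span (T \<union> W)"
    and A: "A \<subseteq> N" "independent A" "span A \<inter> W \<subseteq> {0}"
  obtains B where "A \<subseteq> B" "B \<subseteq> N" "finite B" "independent B" "span B \<inter> W \<subseteq> {0}"
    "N \<subseteq> span (B \<union> W)"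
proof -
  obtain C where C: "C \<subseteq> W" "independent C" "W \<subseteq> span C"
    using maximal_independent_subset[of W] by blast
  have spC: "span C = W" using C W by (metis span_minimal span_subspace)
  have iAC: "independent (A \<union> C)" using indep_Un_span[OF A(2) C(2)] A(3) spC by blast
  have AC: "A \<inter> C = {}"
  proof -
    have "A \<inter> C \<subseteq> span A \<inter> W" using C by (auto intro: span_base)
    hence "A \<inter> C \<subseteq> {0}" using A(3) by blast
    moreover have "0 \<notin> A" using A(2) dependent_zero by blast
    ultimately show ?thesis by blast
  qed
  obtain B' where B': "A \<union> C \<subseteq> B'" "B' \<subseteq> N" "independent B'" "N \<subseteq> span B'"
    using maximal_independent_subset_extend[OF _ iAC, of N] A(1) C(1) N(2) by blast
  define B where "B = B' - C"
  have BC: "B \<union> C = B'" "B \<inter> C = {}" using B' by (auto simp: B_def)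
  have iB: "independent B" using independent_mono[OF B'(3)] by (auto simp: B_def)
  have "span B \<inter> span C \<subseteq> {0}" using span_Int_indep[of B C] BC B'(3) by simp
  hence sB: "span B \<inter> W \<subseteq> {0}" using spC by simp
  have "N \<subseteq> span (B \<union> W)"
    using B'(4) BC(1) C(1) span_mono[of "B \<union> C" "B \<union> W"] by blast
  moreover have "finite B"
    using bound_mod[OF W T(1) iB sB] B'(2) T(2) by (auto simp: B_def)
  moreover have "A \<subseteq> B" using B'(1) AC by (auto simp: B_def)
  moreover have "B \<subseteq> N" using B'(2) by (auto simp: B_def)
  ultimately show ?thesis using that iB sB by blast
qed

lemma dim_quot_eq:
  assumes W: "subspace W" and B: "finite B" "B \<subseteq> U" "U \<subseteq> span (B \<union> W)" "independent B"
    "span B \<inter> W \<subseteq> {0}"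
  shows "dim_quot scale U W = card B"
  unfolding dim_quot_def
proof (rule Least_equality)
  show "\<exists>B'. finite B' \<and> card B' = card B \<and> B' \<subseteq> U \<and> U \<subseteq> span (B' \<union> W)"
    using B by blast
  fix n assume "\<exists>B'. finite B' \<and> card B' = n \<and> B' \<subseteq> U \<and> U \<subseteq> span (B' \<union> W)"
  then obtain B' where "finite B'" "card B' = n" "B' \<subseteq> U" "U \<subseteq> span (B' \<union> W)" by blast
  thus "card B \<le> n" using bound_mod[OF W _ B(4,5)] B(2) by blast
qed

end

context vector_space begin

lemma basis_mod_exists:
  assumes W: "subspace W" and U: "subspace U" "W \<subseteq> U" and fin: "fin_dim_quot scale U W"
  obtains B where "B \<subseteq> U" "finite B" "independent B" "span B \<inter> W \<subseteq> {0}" "U \<subseteq> span (B \<union> W)"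
proof -
  obtain T where T: "finite T" "T \<subseteq> U" "U \<subseteq> span (T \<union> W)"
    using fin unfolding fin_dim_quot_def by blast
  show ?thesis
    using extend_mod[OF W U(1) U(2) T(1) T(3) empty_subsetI independent_empty] that by auto
qed

lemma dim_quot_self:
  assumes W: "subspace W" shows "dim_quot scale W W = 0"
proof -
  have "W \<subseteq> span ({} \<union> W)" by (simp add: span_superset)
  then show ?thesis using dim_quot_eq[OF W finite.emptyI empty_subsetI _ independent_empty] by simp
qed

end

context vector_space_pair begin

lemma rank_nullity_quot:
  assumes f: "Vector_Spaces.linear s1 s2 f" and U: "vs1.subspace U" and W: "vs1.subspace W" "W \<subseteq> U"
    and W': "vs2.subspace W'" "f ` W \<subseteq> W'" and fin: "fin_dim_quot s1 U W"
  shows "fin_dim_quot s1 {u\<in>U. f u \<in> W'} W"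
    "fin_dim_quot s2 (vs2.span (f ` U \<union> W')) W'"
    "dim_quot s1 U W = dim_quot s1 {u\<in>U. f u \<in> W'} W + dim_quot s2 (vs2.span (f ` U \<union> W')) W'"
proof -
  define N where "N = {u\<in>U. f u \<in> W'}"
  define I where "I = vs2.span (f ` U \<union> W')"
  have "N = U \<inter> {x. f x \<in> W'}" by (auto simp: N_def)
  hence N: "vs1.subspace N"
    using vs1.subspace_inter[OF U linear_subspace_linear_preimage[OF f W'(1)]] by simp
  have WN: "W \<subseteq> N" using W W' by (auto simp: N_def)
  have NU: "N \<subseteq> U" by (auto simp: N_def)
  obtain T where T: "finite T" "T \<subseteq> U" "U \<subseteq> vs1.span (T \<union> W)"
    using fin unfolding fin_dim_quot_def by blast
  have NT: "N \<subseteq> vs1.span (T \<union> W)" using NU T(3) by blast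
  obtain A where A: "A \<subseteq> N" "finite A" "vs1.independent A" "vs1.span A \<inter> W \<subseteq> {0}"
      "N \<subseteq> vs1.span (A \<union> W)"
    using vs1.extend_mod[OF W(1) N WN T(1) NT empty_subsetI vs1.independent_empty] by auto
  have AU: "A \<subseteq> U" using A(1) NU by blast
  obtain B where B: "A \<subseteq> B" "B \<subseteq> U" "finite B" "vs1.independent B" "vs1.span B \<inter> W \<subseteq> {0}"
      "U \<subseteq> vs1.span (B \<union> W)"
    using vs1.extend_mod[OF W(1) U W(2) T(1) T(3) AU A(3) A(4)] by blast
  define D where "D = B - A"
  have BAD: "B = A \<union> D" "A \<inter> D = {}" using B(1) by (auto simp: D_def)
  have DU: "D \<subseteq> U" using B(2) by (auto simp: D_def)
  have spDU: "vs1.span D \<subseteq> U" using DU U by (simp add: vs1.span_minimal)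
  have spAW: "vs1.span (A \<union> W) \<subseteq> N" using A(1) WN N by (simp add: vs1.span_minimal)
  have spWW: "vs1.span W = W" using W(1) by simp
  have ker: "d = 0" if d: "d \<in> vs1.span D" "f d \<in> W'" for d
  proof -
    have "d \<in> N" using d spDU by (auto simp: N_def)
    hence "d \<in> vs1.span (A \<union> W)" using A(5) by blast
    then obtain a w where aw: "a \<in> vs1.span A" "w \<in> vs1.span W" "d = a + w"
      unfolding vs1.span_Un by blast
    have w: "w \<in> W" using aw(2) spWW by simp
    have sDB: "vs1.span D \<subseteq> vs1.span B" by (rule vs1.span_mono) (simp add: D_def)
    have sAB: "vs1.span A \<subseteq> vs1.span B" by (rule vs1.span_mono) (simp add: B(1))
    have "d \<in> vs1.span B" using d(1) sDB by (rule subsetD[rotated])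
    moreover have "a \<in> vs1.span B" using aw(1) sAB by (rule subsetD[rotated])
    ultimately have "d - a \<in> vs1.span B" by (rule vs1.span_diff)
    moreover have "d - a = w" using aw(3) by simp
    ultimately have "w = 0" using B(5) w by blast
    hence "d \<in> vs1.span D \<inter> vs1.span A" using aw d by simp
    moreover have "vs1.span D \<inter> vs1.span A \<subseteq> {0}"
    proof -
      have "vs1.independent (D \<union> A)" using B(4) BAD by (simp add: Un_commute)
      moreover have "D \<inter> A = {}" using BAD by blast
      ultimately show ?thesis by (rule vs1.span_Int_indep)
    qed
    ultimately show "d = 0" by blast
  qed
  have inj: "inj_on f (vs1.span D)"
    unfolding linear_inj_on_iff_eq_0[OF f vs1.subspace_span]
  proof (intro ballI impI)
    fix x assume x: "x \<in> vs1.span D" "f x = 0"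
    have "f x \<in> W'" using x(2) vs2.subspace_0[OF W'(1)] by simp
    then show "x = 0" using ker[OF x(1)] by simp
  qed
  have iD: "vs1.independent D" by (rule vs1.independent_mono[OF B(4)]) (simp add: D_def)
  have iD: "vs2.independent (f ` D)"
    using linear_independent_injective_image[OF f iD inj] .
  have cardD: "card (f ` D) = card D"
    by (rule card_image[OF inj_on_subset[OF inj vs1.span_superset]])
  have spfD: "vs2.span (f ` D) \<inter> W' \<subseteq> {0}"
  proof
    fix x assume x: "x \<in> vs2.span (f ` D) \<inter> W'"
    hence "x \<in> f ` vs1.span D" by (simp add: linear_span_image[OF f])
    then obtain d where "d \<in> vs1.span D" "x = f d" by blast
    moreover from this have "d = 0" using ker x by auto
    ultimately show "x \<in> {0}" using linear_0[OF f] by simp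
  qed
  have fDI: "f ` D \<subseteq> I" using DU by (auto simp: I_def intro: vs2.span_base)
  have IfD: "I \<subseteq> vs2.span (f ` D \<union> W')"
    unfolding I_def
  proof (rule vs2.span_minimal)
    show "vs2.subspace (vs2.span (f ` D \<union> W'))" by simp
    show "f ` U \<union> W' \<subseteq> vs2.span (f ` D \<union> W')"
    proof
      fix y assume "y \<in> f ` U \<union> W'"
      then consider "y \<in> W'" | u where "u \<in> U" "y = f u" by blast
      then show "y \<in> vs2.span (f ` D \<union> W')"
      proof cases
        case 1 then show ?thesis by (auto intro: vs2.span_base)
      next
        case 2
        have "vs1.span (B \<union> W) = vs1.span (D \<union> (A \<union> W))" using BAD
          by (simp add: Un_ac)
        hence "u \<in> vs1.span (D \<union> (A \<union> W))" using 2 B(6) by blast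
        then obtain d y' where dy: "d \<in> vs1.span D" "y' \<in> vs1.span (A \<union> W)" "u = d + y'"
          unfolding vs1.span_Un[of D] by blast
        have "f y' \<in> W'" using dy(2) spAW by (auto simp: N_def)
        hence 1: "f y' \<in> vs2.span (f ` D \<union> W')" by (auto intro: vs2.span_base)
        have "f d \<in> vs2.span (f ` D)" using dy(1) by (simp add: linear_span_image[OF f])
        hence 2: "f d \<in> vs2.span (f ` D \<union> W')" using vs2.span_mono[of "f ` D" "f ` D \<union> W'"] by blast
        have "f u = f d + f y'" using dy(3) linear_add[OF f] by simp
        then show ?thesis using vs2.span_add[OF 2 1] \<open>y = f u\<close> by simp
      qed
    qed
  qed
  have finD: "finite D" using B(3) by (simp add: D_def)
  have dimN: "dim_quot s1 N W = card A"
    by (rule vs1.dim_quot_eq[OF W(1) A(2) A(1) A(5) A(3) A(4)])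
  have dimU: "dim_quot s1 U W = card B"
    by (rule vs1.dim_quot_eq[OF W(1) B(3) B(2) B(6) B(4) B(5)])
  have dimI: "dim_quot s2 I W' = card (f ` D)"
    by (rule vs2.dim_quot_eq[OF W'(1) _ fDI IfD iD spfD]) (use finD in simp)
  have "card B = card A + card D" using BAD B(3) card_Un_disjoint by (metis finite_Un)
  then show "dim_quot s1 U W = dim_quot s1 {u\<in>U. f u \<in> W'} W + dim_quot s2 (vs2.span (f ` U \<union> W')) W'"
    using dimN dimU dimI cardD by (simp add: N_def I_def)
  show "fin_dim_quot s1 {u\<in>U. f u \<in> W'} W"
    unfolding fin_dim_quot_def using A(1,2,5) by (auto simp: N_def)
  show "fin_dim_quot s2 (vs2.span (f ` U \<union> W')) W'"
    unfolding fin_dim_quot_def using fDI IfD finD by (auto simp: I_def)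
qed

end



definition coef :: "nat \<Rightarrow> ((nat \<Rightarrow> real) \<Rightarrow> 'a) \<Rightarrow> ((nat \<Rightarrow> real) \<Rightarrow> 'a) \<Rightarrow> 'f::field"
  where "coef p \<sigma> \<tau> = (\<Sum>k\<le>p. if singular_face p k \<sigma> = \<tau> then (-1) ^ k else 0)"

lemma dd_int:
  assumes "singular_simplex (Suc p) X \<sigma>" "p \<noteq> 0"
  shows "(\<Sum>k\<le>Suc p. (-1) ^ k * (\<Sum>j\<le>p. (-1) ^ j *
            (if \<rho> = singular_face p j (singular_face (Suc p) k \<sigma>) then 1 else 0))) = (0::int)"
proof -
  have "chain_boundary p (chain_boundary (Suc p) (frag_of \<sigma>)) = 0"
    using chain_boundary_boundary[of "Suc p" X "frag_of \<sigma>"] assms by (simp add: singular_chain_of)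
  then have "Poly_Mapping.lookup (chain_boundary p (chain_boundary (Suc p) (frag_of \<sigma>))) \<rho> = 0"
    by simp
  then show ?thesis using assms(2)
    by (simp add: chain_boundary_of chain_boundary_sum chain_boundary_cmul lookup_sum o_def del: sum.atMost_Suc)
qed


lemma dd_field:
  assumes "singular_simplex (Suc p) X \<sigma>" "p \<noteq> 0"
  shows "(\<Sum>k\<le>Suc p. (-1) ^ k * coef p (singular_face (Suc p) k \<sigma>) \<rho>) = (0::'f::field)"
proof -
  have "(\<Sum>k\<le>Suc p. (-1) ^ k * coef p (singular_face (Suc p) k \<sigma>) \<rho>) =
     (of_int (\<Sum>k\<le>Suc p. (-1) ^ k * (\<Sum>j\<le>p. (-1) ^ j *
            (if \<rho> = singular_face p j (singular_face (Suc p) k \<sigma>) then 1 else 0))) :: 'f)"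
    unfolding coef_def by (auto simp del: sum.atMost_Suc intro!: sum.cong)
  also have "\<dots> = 0" by (simp only: dd_int[OF assms] of_int_0)
  finally show ?thesis .
qed

lemma fbnd_expand:
  "fchain_boundary p c = (if p = 0 then 0 else (\<lambda>\<tau>. \<Sum>\<sigma>\<in>{\<sigma>. c \<sigma> \<noteq> 0}. c \<sigma> * coef p \<sigma> \<tau>))"
  by (simp add: fchain_boundary_def coef_def)

lemma fbnd_eq:
  assumes "finite S" "{\<sigma>. c \<sigma> \<noteq> 0} \<subseteq> S"
  shows "fchain_boundary p c \<tau> = (if p = 0 then 0 else (\<Sum>\<sigma>\<in>S. c \<sigma> * coef p \<sigma> \<tau>))"
  unfolding fbnd_expand using assms by (auto intro!: sum.mono_neutral_left)

lemma fbnd_supp: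
  assumes "finite {\<sigma>. c \<sigma> \<noteq> 0}"
  shows "{\<tau>. fchain_boundary p c \<tau> \<noteq> 0} \<subseteq>
     (\<lambda>(\<sigma>,k). singular_face p k \<sigma>) ` ({\<sigma>. c \<sigma> \<noteq> (0::'f::field)} \<times> {..p})"
proof
  fix \<tau> assume "\<tau> \<in> {\<tau>. fchain_boundary p c \<tau> \<noteq> 0}"
  hence ne: "p \<noteq> 0" "(\<Sum>\<sigma>\<in>{\<sigma>. c \<sigma> \<noteq> 0}. c \<sigma> * coef p \<sigma> \<tau>) \<noteq> 0"
    by (auto simp: fbnd_expand split: if_splits)
  obtain \<sigma> where \<sigma>: "\<sigma> \<in> {\<sigma>. c \<sigma> \<noteq> 0}" "c \<sigma> * coef p \<sigma> \<tau> \<noteq> 0"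
    by (rule sum.not_neutral_contains_not_neutral[OF ne(2)])
  from \<sigma>(2) have "(\<Sum>k\<le>p. if singular_face p k \<sigma> = \<tau> then (-1) ^ k else (0::'f)) \<noteq> 0"
    by (simp add: coef_def)
  then obtain k where k: "k \<in> {..p}" "(if singular_face p k \<sigma> = \<tau> then (-1) ^ k else (0::'f)) \<noteq> 0"
    by (rule sum.not_neutral_contains_not_neutral)
  then have "singular_face p k \<sigma> = \<tau>" by (simp split: if_splits)
  then show "\<tau> \<in> (\<lambda>(\<sigma>,k). singular_face p k \<sigma>) ` ({\<sigma>. c \<sigma> \<noteq> 0} \<times> {..p})"
    using \<sigma>(1) k(1) by (intro image_eqI[of _ _ "(\<sigma>,k)"]) auto
qed

lemma fbnd_bnd:
  assumes c: "fsingular_chain (Suc p) Y (c :: ('a,'f::field) fchain)"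
  shows "fchain_boundary p (fchain_boundary (Suc p) c) = 0"
proof (cases "p = 0")
  case True thus ?thesis by (simp add: fchain_boundary_def)
next
  case False
  define S where "S = {\<sigma>. c \<sigma> \<noteq> 0}"
  have fS: "finite S" using c by (simp add: fsingular_chain_def S_def)
  define S' where "S' = (\<lambda>(\<sigma>,k). singular_face (Suc p) k \<sigma>) ` (S \<times> {..Suc p})"
  have fS': "finite S'" using fS by (simp add: S'_def)
  define d where "d = fchain_boundary (Suc p) c"
  have d: "d \<tau> = (\<Sum>\<sigma>\<in>S. c \<sigma> * coef (Suc p) \<sigma> \<tau>)" for \<tau>
    by (simp add: d_def fbnd_expand S_def)
  have supp: "{\<tau>. d \<tau> \<noteq> 0} \<subseteq> S'"
    unfolding d_def S'_def S_def by (rule fbnd_supp) (use fS in \<open>simp add: S_def\<close>)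
  show ?thesis
    unfolding d_def[symmetric]
  proof (rule ext)
    fix \<rho>
    have "fchain_boundary p d \<rho> = (\<Sum>\<tau>\<in>S'. d \<tau> * coef p \<tau> \<rho>)"
      using fbnd_eq[OF fS' supp] False by simp
    also have "\<dots> = (\<Sum>\<tau>\<in>S'. \<Sum>\<sigma>\<in>S. c \<sigma> * (coef (Suc p) \<sigma> \<tau> * coef p \<tau> \<rho>))"
      by (simp add: d sum_distrib_right mult.assoc)
    also have "\<dots> = (\<Sum>\<sigma>\<in>S. \<Sum>\<tau>\<in>S'. c \<sigma> * (coef (Suc p) \<sigma> \<tau> * coef p \<tau> \<rho>))"
      by (rule sum.swap)
    also have "\<dots> = (\<Sum>\<sigma>\<in>S. c \<sigma> * (\<Sum>\<tau>\<in>S'. coef (Suc p) \<sigma> \<tau> * coef p \<tau> \<rho>))"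
      by (simp add: sum_distrib_left)
    also have "\<dots> = 0"
    proof (rule sum.neutral, intro ballI)
      fix \<sigma> assume \<sigma>: "\<sigma> \<in> S"
      have ss: "singular_simplex (Suc p) Y \<sigma>" using c \<sigma> by (simp add: fsingular_chain_def S_def)
      have "(\<Sum>\<tau>\<in>S'. coef (Suc p) \<sigma> \<tau> * coef p \<tau> \<rho> :: 'f) =
          (\<Sum>\<tau>\<in>S'. \<Sum>k\<le>Suc p. (if singular_face (Suc p) k \<sigma> = \<tau> then (-1) ^ k * coef p \<tau> \<rho> else 0))"
        unfolding coef_def[of "Suc p"] sum_distrib_right by (intro sum.cong refl) simp
      also have "\<dots> = (\<Sum>k\<le>Suc p. \<Sum>\<tau>\<in>S'. (if singular_face (Suc p) k \<sigma> = \<tau> then (-1) ^ k * coef p \<tau> \<rho> else 0))"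
        by (rule sum.swap)
      also have "\<dots> = (\<Sum>k\<le>Suc p. (-1) ^ k * coef p (singular_face (Suc p) k \<sigma>) \<rho>)"
        using fS' \<sigma> by (intro sum.cong refl) (auto simp: S'_def)
      also have "\<dots> = 0" by (rule dd_field[OF ss False])
      finally show "c \<sigma> * (\<Sum>\<tau>\<in>S'. coef (Suc p) \<sigma> \<tau> * coef p \<tau> \<rho>) = 0" by simp
    qed
    finally show "fchain_boundary p d \<rho> = 0 \<rho>" by simp
  qed
qed


subsection \<open>Linear structure of chains\<close>

lemma vs_fscale: "vector_space (fscale :: 'f::field \<Rightarrow> ('a,'f) fchain \<Rightarrow> ('a,'f) fchain)"
  by unfold_locales (auto simp: fscale_def fun_eq_iff algebra_simps)

lemma vs_pscale: "vector_space (pscale :: 'f::field \<Rightarrow> ('a,'f) fchain \<times> ('a,'f) fchain \<Rightarrow> _)"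
  by unfold_locales (auto simp: pscale_def fscale_def fun_eq_iff algebra_simps prod_eq_iff)

lemma fsc_finite: "fsingular_chain p Y c \<Longrightarrow> finite {\<sigma>. c \<sigma> \<noteq> 0}"
  by (simp add: fsingular_chain_def)

lemma fsc_0: "fsingular_chain p Y (0::('a,'f::field) fchain)"
  by (simp add: fsingular_chain_def)

lemma fsc_add:
  assumes "fsingular_chain p Y c" "fsingular_chain p Y (d::('a,'f::field) fchain)"
  shows "fsingular_chain p Y (c + d)"
proof -
  have "{\<sigma>. (c + d) \<sigma> \<noteq> 0} \<subseteq> {\<sigma>. c \<sigma> \<noteq> 0} \<union> {\<sigma>. d \<sigma> \<noteq> 0}" by auto
  moreover have "finite ({\<sigma>. c \<sigma> \<noteq> 0} \<union> {\<sigma>. d \<sigma> \<noteq> 0})"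
    using assms by (simp add: fsingular_chain_def)
  ultimately show ?thesis using assms unfolding fsingular_chain_def
    by (metis (mono_tags, lifting) add.right_neutral finite_subset plus_fun_apply)
qed

lemma fsc_scale:
  assumes "fsingular_chain p Y (c::('a,'f::field) fchain)"
  shows "fsingular_chain p Y (fscale r c)"
proof -
  have "{\<sigma>. fscale r c \<sigma> \<noteq> 0} \<subseteq> {\<sigma>. c \<sigma> \<noteq> 0}" by (auto simp: fscale_def)
  then show ?thesis using assms unfolding fsingular_chain_def
    by (auto simp: fscale_def intro: finite_subset)
qed

lemma fbnd_add:
  assumes "finite {\<sigma>. c \<sigma> \<noteq> 0}" "finite {\<sigma>. d \<sigma> \<noteq> (0::'f::field)}"
  shows "fchain_boundary p (c + d) = fchain_boundary p c + fchain_boundary p d"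
proof (rule ext)
  fix \<tau>
  define S where "S = {\<sigma>. c \<sigma> \<noteq> 0} \<union> {\<sigma>. d \<sigma> \<noteq> 0}"
  have fS: "finite S" using assms by (simp add: S_def)
  have 1: "fchain_boundary p (c + d) \<tau> = (if p = 0 then 0 else \<Sum>\<sigma>\<in>S. (c + d) \<sigma> * coef p \<sigma> \<tau>)"
    by (rule fbnd_eq[OF fS]) (auto simp: S_def)
  have 2: "fchain_boundary p c \<tau> = (if p = 0 then 0 else \<Sum>\<sigma>\<in>S. c \<sigma> * coef p \<sigma> \<tau>)"
    by (rule fbnd_eq[OF fS]) (auto simp: S_def)
  have 3: "fchain_boundary p d \<tau> = (if p = 0 then 0 else \<Sum>\<sigma>\<in>S. d \<sigma> * coef p \<sigma> \<tau>)"
    by (rule fbnd_eq[OF fS]) (auto simp: S_def)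
  show "fchain_boundary p (c + d) \<tau> = (fchain_boundary p c + fchain_boundary p d) \<tau>"
    unfolding plus_fun_apply 1 2 3 by (simp add: sum.distrib distrib_right)
qed

lemma fbnd_scale:
  assumes fin: "finite {\<sigma>. c \<sigma> \<noteq> (0::'f::field)}"
  shows "fchain_boundary p (fscale r c) = fscale r (fchain_boundary p c)"
proof (rule ext)
  fix \<tau>
  have sub: "{\<sigma>. fscale r c \<sigma> \<noteq> 0} \<subseteq> {\<sigma>. c \<sigma> \<noteq> 0}" by (auto simp: fscale_def)
  have 1: "fchain_boundary p (fscale r c) \<tau> = (if p = 0 then 0 else \<Sum>\<sigma>\<in>{\<sigma>. c \<sigma> \<noteq> 0}. fscale r c \<sigma> * coef p \<sigma> \<tau>)"
    by (rule fbnd_eq[OF fin sub])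
  have 2: "fchain_boundary p c \<tau> = (if p = 0 then 0 else \<Sum>\<sigma>\<in>{\<sigma>. c \<sigma> \<noteq> 0}. c \<sigma> * coef p \<sigma> \<tau>)"
    by (rule fbnd_eq[OF fin]) simp
  show "fchain_boundary p (fscale r c) \<tau> = fscale r (fchain_boundary p c) \<tau>"
    unfolding 1 by (simp add: 2 fscale_def sum_distrib_left mult.assoc)
qed

lemma fbnd_0: "fchain_boundary p (0::('a,'f::field) fchain) = 0"
  by (simp add: fchain_boundary_def fun_eq_iff)

lemma fbnd_chain:
  assumes c: "fsingular_chain (Suc p) Y (c::('a,'f::field) fchain)"
  shows "fsingular_chain p Y (fchain_boundary (Suc p) c)"
proof -
  have fin: "finite {\<sigma>. c \<sigma> \<noteq> 0}" using c by (simp add: fsingular_chain_def)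
  note sub = fbnd_supp[OF fin, of "Suc p"]
  have "finite {\<tau>. fchain_boundary (Suc p) c \<tau> \<noteq> 0}"
    by (rule finite_subset[OF sub]) (use fin in simp)
  moreover have "singular_simplex p Y \<tau>" if "fchain_boundary (Suc p) c \<tau> \<noteq> 0" for \<tau>
  proof -
    from that sub have "\<tau> \<in> (\<lambda>(\<sigma>,k). singular_face (Suc p) k \<sigma>) ` ({\<sigma>. c \<sigma> \<noteq> 0} \<times> {..Suc p})"
      using subsetD[OF sub, of \<tau>] that by simp
    then obtain \<sigma> k where "c \<sigma> \<noteq> 0" "k \<le> Suc p" "\<tau> = singular_face (Suc p) k \<sigma>"
      by auto
    then show ?thesis
      using singular_simplex_singular_face[of "Suc p" Y \<sigma> k] c by (simp add: fsingular_chain_def)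
  qed
  ultimately show ?thesis by (simp add: fsingular_chain_def)
qed

lemma cycles_subspace: "module.subspace fscale (fcycles p Y :: ('a,'f::field) fchain set)"
proof -
  interpret V: vector_space "fscale :: 'f \<Rightarrow> ('a,'f) fchain \<Rightarrow> _" by (rule vs_fscale)
  show ?thesis
  proof (rule V.subspaceI)
    show "(0::('a,'f) fchain) \<in> fcycles p Y" by (simp add: fcycles_def fsc_0 fbnd_0)
  next
    fix x y :: "('a,'f) fchain" assume "x \<in> fcycles p Y" "y \<in> fcycles p Y"
    then have "fsingular_chain p Y x" "fsingular_chain p Y y" "fchain_boundary p x = 0"
      "fchain_boundary p y = 0" by (simp_all add: fcycles_def)
    then show "x + y \<in> fcycles p Y"
      by (simp add: fcycles_def fsc_add fbnd_add[OF fsc_finite fsc_finite])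
  next
    fix r :: 'f and x :: "('a,'f) fchain" assume "x \<in> fcycles p Y"
    then have "fsingular_chain p Y x" "fchain_boundary p x = 0" by (simp_all add: fcycles_def)
    then show "fscale r x \<in> fcycles p Y"
      by (simp add: fcycles_def fsc_scale fbnd_scale[OF fsc_finite])
  qed
qed

lemma boundaries_subspace: "module.subspace fscale (fboundaries p Y :: ('a,'f::field) fchain set)"
proof -
  interpret V: vector_space "fscale :: 'f \<Rightarrow> ('a,'f) fchain \<Rightarrow> _" by (rule vs_fscale)
  show ?thesis
  unfolding fboundaries_def
  proof (rule V.subspaceI)
    show "(0::('a,'f) fchain) \<in> fchain_boundary (Suc p) ` {c. fsingular_chain (Suc p) Y c}"
      using fsc_0 by (intro image_eqI[of _ _ 0]) (simp_all add: fbnd_0)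
  next
    fix x y :: "('a,'f) fchain"
    assume "x \<in> fchain_boundary (Suc p) ` {c. fsingular_chain (Suc p) Y c}"
      "y \<in> fchain_boundary (Suc p) ` {c. fsingular_chain (Suc p) Y c}"
    then obtain a b where ab: "fsingular_chain (Suc p) Y a" "fsingular_chain (Suc p) Y b"
      "x = fchain_boundary (Suc p) a" "y = fchain_boundary (Suc p) b" by blast
    then have "x + y = fchain_boundary (Suc p) (a + b)"
      by (simp add: fbnd_add[OF fsc_finite fsc_finite])
    then show "x + y \<in> fchain_boundary (Suc p) ` {c. fsingular_chain (Suc p) Y c}"
      using fsc_add[OF ab(1,2)] by blast
  next
    fix r :: 'f and x :: "('a,'f) fchain"
    assume "x \<in> fchain_boundary (Suc p) ` {c. fsingular_chain (Suc p) Y c}"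
    then obtain a where a: "fsingular_chain (Suc p) Y a" "x = fchain_boundary (Suc p) a" by blast
    then have "fscale r x = fchain_boundary (Suc p) (fscale r a)"
      by (simp add: fbnd_scale[OF fsc_finite])
    then show "fscale r x \<in> fchain_boundary (Suc p) ` {c. fsingular_chain (Suc p) Y c}"
      using fsc_scale[OF a(1)] by blast
  qed
qed

lemma boundaries_cycles: "fboundaries p Y \<subseteq> (fcycles p Y :: ('a,'f::field) fchain set)"
proof
  fix x :: "('a,'f) fchain" assume "x \<in> fboundaries p Y"
  then obtain c where c: "fsingular_chain (Suc p) Y c" "x = fchain_boundary (Suc p) c"
    unfolding fboundaries_def by blast
  then show "x \<in> fcycles p Y"
    unfolding fcycles_def using fbnd_chain[OF c(1)] fbnd_bnd[OF c(1)] by simp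
qed
lemma fsc_mono:
  assumes "fsingular_chain p (subtopology X S) c" "S \<subseteq> T"
  shows "fsingular_chain p (subtopology X T) c"
  using assms unfolding fsingular_chain_def by (meson singular_simplex_mono)

lemma cycles_mono:
  "S \<subseteq> T \<Longrightarrow> fcycles p (subtopology X S) \<subseteq> (fcycles p (subtopology X T) :: ('a,'f::field) fchain set)"
  unfolding fcycles_def using fsc_mono by blast

lemma boundaries_mono:
  "S \<subseteq> T \<Longrightarrow> fboundaries p (subtopology X S) \<subseteq> (fboundaries p (subtopology X T) :: ('a,'f::field) fchain set)"
  unfolding fboundaries_def using fsc_mono by blast


subsection \<open>Splitting cycles of a separated union\<close>

lemma simplex_split:
  assumes cl: "X closure_of X1 \<inter> X closure_of X2 = {}" and X12: "X1 \<subseteq> topspace X" "X2 \<subseteq> topspace X"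
    and ss: "singular_simplex p (subtopology X (X1 \<union> X2)) \<sigma>"
  shows "\<sigma> ` standard_simplex p \<subseteq> X1 \<or> \<sigma> ` standard_simplex p \<subseteq> X2"
proof -
  have s: "singular_simplex p X \<sigma>" "\<sigma> ` standard_simplex p \<subseteq> X1 \<union> X2"
    using ss by (simp_all add: singular_simplex_subtopology)
  have cont: "continuous_map (subtopology (powertop_real UNIV) (standard_simplex p)) X \<sigma>"
    using s(1) by (simp add: singular_simplex_def)
  have "connectedin (subtopology (powertop_real UNIV) (standard_simplex p)) (standard_simplex p)"
    by (simp add: connectedin_subtopology connectedin_standard_simplex)
  hence conn: "connectedin X (\<sigma> ` standard_simplex p)"
    by (rule connectedin_continuous_map_image[OF cont])
  have "X1 \<subseteq> X closure_of X1" "X2 \<subseteq> X closure_of X2"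
    using X12 by (simp_all add: closure_of_subset)
  hence "separatedin X X1 X2" unfolding separatedin_def using X12 cl by blast
  thus ?thesis using connectedin_subset_separated_union[OF conn _ s(2)] by blast
qed

lemma face_image:
  assumes "1 \<le> p" "k \<le> p"
  shows "singular_face p k \<sigma> ` standard_simplex (p - 1) \<subseteq> \<sigma> ` standard_simplex p"
  using assms by (auto simp: singular_face_def simplical_face_in_standard_simplex)

lemma restrict_bnd:
  assumes fin: "finite {\<sigma>. c \<sigma> \<noteq> (0::'f::field)}"
    and PQ: "\<And>\<sigma> k. c \<sigma> \<noteq> 0 \<Longrightarrow> k \<le> p \<Longrightarrow> P \<sigma> \<longleftrightarrow> Q (singular_face p k \<sigma>)"
  shows "fchain_boundary p (\<lambda>\<sigma>. if P \<sigma> then c \<sigma> else 0) = (\<lambda>\<tau>. if Q \<tau> then fchain_boundary p c \<tau> else 0)"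
proof (rule ext)
  fix \<tau>
  define S where "S = {\<sigma>. c \<sigma> \<noteq> 0}"
  have sub: "{\<sigma>. (if P \<sigma> then c \<sigma> else 0) \<noteq> 0} \<subseteq> S" by (auto simp: S_def)
  have 1: "fchain_boundary p (\<lambda>\<sigma>. if P \<sigma> then c \<sigma> else 0) \<tau> =
      (if p = 0 then 0 else \<Sum>\<sigma>\<in>S. (if P \<sigma> then c \<sigma> else 0) * coef p \<sigma> \<tau>)"
    by (rule fbnd_eq[OF fin[folded S_def] sub])
  have 2: "fchain_boundary p c \<tau> = (if p = 0 then 0 else \<Sum>\<sigma>\<in>S. c \<sigma> * coef p \<sigma> \<tau>)"
    by (rule fbnd_eq[OF fin[folded S_def]]) (simp add: S_def)
  have 3: "(if P \<sigma> then c \<sigma> else 0) * coef p \<sigma> \<tau> = (if Q \<tau> then c \<sigma> * coef p \<sigma> \<tau> else 0)"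
    if "\<sigma> \<in> S" for \<sigma>
  proof (cases "coef p \<sigma> \<tau> = (0::'f)")
    case True then show ?thesis by simp
  next
    case False
    then obtain k where k: "k \<in> {..p}" "(if singular_face p k \<sigma> = \<tau> then (-1) ^ k else (0::'f)) \<noteq> 0"
      unfolding coef_def by (rule sum.not_neutral_contains_not_neutral)
    then have "singular_face p k \<sigma> = \<tau>" by (simp split: if_splits)
    then have "P \<sigma> \<longleftrightarrow> Q \<tau>" using PQ[of \<sigma> k] that k(1) by (simp add: S_def)
    then show ?thesis by simp
  qed
  have 4: "(\<Sum>\<sigma>\<in>S. (if P \<sigma> then c \<sigma> else 0) * coef p \<sigma> \<tau>) =
      (\<Sum>\<sigma>\<in>S. if Q \<tau> then c \<sigma> * coef p \<sigma> \<tau> else 0)"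
    by (rule sum.cong[OF refl 3])
  show "fchain_boundary p (\<lambda>\<sigma>. if P \<sigma> then c \<sigma> else 0) \<tau> =
      (if Q \<tau> then fchain_boundary p c \<tau> else 0)"
    unfolding 1 2 4 by (cases "Q \<tau>") simp_all
qed

lemma cycle_split:
  assumes cl: "X closure_of X1 \<inter> X closure_of X2 = {}" and X12: "X1 \<subseteq> topspace X" "X2 \<subseteq> topspace X"
    and c: "c \<in> fcycles p (subtopology X (X1 \<union> X2))"
  obtains c1 c2 where "c1 \<in> (fcycles p (subtopology X X1) :: ('a,'f::field) fchain set)"
    "c2 \<in> fcycles p (subtopology X X2)" "c = c1 + c2"
proof -
  have cs: "fsingular_chain p (subtopology X (X1 \<union> X2)) c" and cb: "fchain_boundary p c = 0"
    using c by (simp_all add: fcycles_def)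
  have fin: "finite {\<sigma>. c \<sigma> \<noteq> 0}" using cs by (simp add: fsingular_chain_def)
  have disj: "X1 \<inter> X2 = {}"
    using X12 cl closure_of_subset[of X1 X] closure_of_subset[of X2 X] by blast
  have sp: "singular_simplex p (subtopology X (X1 \<union> X2)) \<sigma>" if "c \<sigma> \<noteq> 0" for \<sigma>
    using cs that by (simp add: fsingular_chain_def)
  have spl: "\<sigma> ` standard_simplex p \<subseteq> X1 \<or> \<sigma> ` standard_simplex p \<subseteq> X2" if "c \<sigma> \<noteq> 0" for \<sigma>
    by (rule simplex_split[OF cl X12 sp[OF that]])
  have ssX: "singular_simplex p X \<sigma>" if "c \<sigma> \<noteq> 0" for \<sigma>
    using sp[OF that] by (simp add: singular_simplex_subtopology)
  define P where "P \<sigma> \<longleftrightarrow> \<sigma> ` standard_simplex p \<subseteq> X1" for \<sigma> :: "(nat \<Rightarrow> real) \<Rightarrow> 'a"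
  define Q where "Q \<tau> \<longleftrightarrow> \<tau> ` standard_simplex (p - 1) \<subseteq> X1" for \<tau> :: "(nat \<Rightarrow> real) \<Rightarrow> 'a"
  define c1 where "c1 = (\<lambda>\<sigma>. if P \<sigma> then c \<sigma> else 0)"
  define c2 where "c2 = (\<lambda>\<sigma>. if \<not> P \<sigma> then c \<sigma> else 0)"
  have PQ: "P \<sigma> \<longleftrightarrow> Q (singular_face p k \<sigma>)" if "c \<sigma> \<noteq> 0" "k \<le> p" "p \<noteq> 0" for \<sigma> k
  proof -
    have fi: "singular_face p k \<sigma> ` standard_simplex (p - 1) \<subseteq> \<sigma> ` standard_simplex p"
      using face_image[of p k \<sigma>] that by simp
    have ne: "singular_face p k \<sigma> ` standard_simplex (p - 1) \<noteq> {}"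
      using nonempty_standard_simplex by blast
    show ?thesis
    proof
      assume "P \<sigma>" then show "Q (singular_face p k \<sigma>)" using fi by (auto simp: P_def Q_def)
    next
      assume q: "Q (singular_face p k \<sigma>)"
      show "P \<sigma>"
      proof (rule ccontr)
        assume "\<not> P \<sigma>"
        hence "\<sigma> ` standard_simplex p \<subseteq> X2" using spl[OF that(1)] by (auto simp: P_def)
        hence "singular_face p k \<sigma> ` standard_simplex (p - 1) \<subseteq> X1 \<inter> X2"
          using q fi by (auto simp: Q_def)
        thus False using ne disj by blast
      qed
    qed
  qed
  have b1: "fchain_boundary p c1 = 0"
  proof (cases "p = 0")
    case True then show ?thesis by (simp add: fchain_boundary_def)
  next
    case False
    have "fchain_boundary p c1 = (\<lambda>\<tau>. if Q \<tau> then fchain_boundary p c \<tau> else 0)"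
      unfolding c1_def by (rule restrict_bnd[OF fin]) (use PQ False in blast)
    then show ?thesis by (simp add: cb fun_eq_iff)
  qed
  have b2: "fchain_boundary p c2 = 0"
  proof (cases "p = 0")
    case True then show ?thesis by (simp add: fchain_boundary_def)
  next
    case False
    have "fchain_boundary p c2 = (\<lambda>\<tau>. if \<not> Q \<tau> then fchain_boundary p c \<tau> else 0)"
      unfolding c2_def by (rule restrict_bnd[OF fin]) (use PQ False in blast)
    then show ?thesis by (simp add: cb fun_eq_iff)
  qed
  have "{\<sigma>. c1 \<sigma> \<noteq> 0} \<subseteq> {\<sigma>. c \<sigma> \<noteq> 0}" "{\<sigma>. c2 \<sigma> \<noteq> 0} \<subseteq> {\<sigma>. c \<sigma> \<noteq> 0}"
    by (auto simp: c1_def c2_def)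
  hence f12: "finite {\<sigma>. c1 \<sigma> \<noteq> 0}" "finite {\<sigma>. c2 \<sigma> \<noteq> 0}" using fin finite_subset by blast+
  have s1: "singular_simplex p (subtopology X X1) \<sigma>" if "c1 \<sigma> \<noteq> 0" for \<sigma>
  proof -
    have "c \<sigma> \<noteq> 0" "P \<sigma>" using that by (auto simp: c1_def split: if_splits)
    then show ?thesis using ssX by (simp add: singular_simplex_subtopology P_def)
  qed
  have s2: "singular_simplex p (subtopology X X2) \<sigma>" if "c2 \<sigma> \<noteq> 0" for \<sigma>
  proof -
    have "c \<sigma> \<noteq> 0" "\<not> P \<sigma>" using that by (auto simp: c2_def split: if_splits)
    then show ?thesis using ssX spl by (auto simp: singular_simplex_subtopology P_def)
  qed
  have "c1 \<in> fcycles p (subtopology X X1)"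
    unfolding fcycles_def fsingular_chain_def using f12(1) s1 b1 by blast
  moreover have "c2 \<in> fcycles p (subtopology X X2)"
    unfolding fcycles_def fsingular_chain_def using f12(2) s2 b2 by blast
  moreover have "c = c1 + c2" by (simp add: c1_def c2_def fun_eq_iff)
  ultimately show ?thesis using that by blast
qed



theorem mainTheorem2:
  fixes X :: "'a topology" and X1 X2 :: "'a set" and q :: nat
  assumes "X1 \<subseteq> topspace X" and "X2 \<subseteq> topspace X"
    and "(X closure_of X1) \<inter> (X closure_of X2) = {}"
    and "fhomology_findim TYPE('f::field) q X X1"
    and "fhomology_findim TYPE('f) q X X2"
    and "fhomology_findim TYPE('f) q X (topspace X)"
  shows "int (bar_infty_mult TYPE('f) q X
               (\<lambda>i. if i = 0 then {} else if i = 1 then X1 else if i = 2 then X1 \<union> X2 else topspace X) 3 3)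
         = int (fhomology_dim TYPE('f) q X (topspace X)) - int (fhomology_dim TYPE('f) q X X1)
           - int (fhomology_dim TYPE('f) q X X2) + int (gamma_dim TYPE('f) q X X1 X2)"
proof -
  note X12 = assms(1,2) and cl = assms(3)
  interpret V: vector_space "fscale :: 'f \<Rightarrow> ('a,'f) fchain \<Rightarrow> _" by (rule vs_fscale)
  interpret P: vector_space "pscale :: 'f \<Rightarrow> ('a,'f) fchain \<times> ('a,'f) fchain \<Rightarrow> _" by (rule vs_pscale)
  interpret VV: vector_space_pair "fscale :: 'f \<Rightarrow> ('a,'f) fchain \<Rightarrow> _" "fscale :: 'f \<Rightarrow> ('a,'f) fchain \<Rightarrow> _"
    by (rule vector_space_pair.intro) (rule vs_fscale)+
  interpret PV: vector_space_pair "pscale :: 'f \<Rightarrow> ('a,'f) fchain \<times> ('a,'f) fchain \<Rightarrow> _"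
      "fscale :: 'f \<Rightarrow> ('a,'f) fchain \<Rightarrow> _"
    by (rule vector_space_pair.intro) (rule vs_pscale vs_fscale)+
  interpret VP: vector_space_pair "fscale :: 'f \<Rightarrow> ('a,'f) fchain \<Rightarrow> _"
      "pscale :: 'f \<Rightarrow> ('a,'f) fchain \<times> ('a,'f) fchain \<Rightarrow> _"
    by (rule vector_space_pair.intro) (rule vs_pscale vs_fscale)+
  define Z :: "('a,'f) fchain set" where "Z = fcycles q X"
  define B :: "('a,'f) fchain set" where "B = fboundaries q X"
  define Z1 :: "('a,'f) fchain set" where "Z1 = fcycles q (subtopology X X1)"
  define B1 :: "('a,'f) fchain set" where "B1 = fboundaries q (subtopology X X1)"
  define Z2 :: "('a,'f) fchain set" where "Z2 = fcycles q (subtopology X X2)"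
  define B2 :: "('a,'f) fchain set" where "B2 = fboundaries q (subtopology X X2)"
  define Z12 :: "('a,'f) fchain set" where "Z12 = fcycles q (subtopology X (X1 \<union> X2))"
  define I where "I = V.span (Z12 \<union> B)"
  have sZ: "V.subspace Z" "V.subspace Z1" "V.subspace Z2"
    unfolding Z_def Z1_def Z2_def by (rule cycles_subspace)+
  have sB: "V.subspace B" "V.subspace B1" "V.subspace B2"
    unfolding B_def B1_def B2_def by (rule boundaries_subspace)+
  have BZ: "B \<subseteq> Z" "B1 \<subseteq> Z1" "B2 \<subseteq> Z2"
    unfolding Z_def Z1_def Z2_def B_def B1_def B2_def by (rule boundaries_cycles)+
  have Z1Z12: "Z1 \<subseteq> Z12" "Z2 \<subseteq> Z12" unfolding Z1_def Z2_def Z12_def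
    by (rule cycles_mono; blast)+
  have Z12Z: "Z12 \<subseteq> Z" unfolding Z12_def Z_def
    using cycles_mono[of "X1 \<union> X2" "topspace X" q X] X12 by simp
  have B1B: "B1 \<subseteq> B" "B2 \<subseteq> B" unfolding B1_def B2_def B_def
    using boundaries_mono[of X1 "topspace X" q X] boundaries_mono[of X2 "topspace X" q X] X12 by simp_all
  have sI: "V.subspace I" unfolding I_def by simp
  have IZ: "I \<subseteq> Z" unfolding I_def using Z12Z BZ(1) sZ(1) by (simp add: V.span_minimal)
  have BI: "B \<subseteq> I" unfolding I_def by (auto intro: V.span_base)
  have zero: "0 \<in> Z2" "0 \<in> B1" "0 \<in> Z1" "0 \<in> B2" using sZ sB by (simp_all add: V.subspace_0)
  have prod_sub: "P.subspace (S \<times> T)" if "V.subspace S" "V.subspace T" for S T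
  proof (rule P.subspaceI)
    show "0 \<in> S \<times> T" using that by (simp add: V.subspace_0 zero_prod_def)
    show "x + y \<in> S \<times> T" if "x \<in> S \<times> T" "y \<in> S \<times> T" for x y
      using that \<open>V.subspace S\<close> \<open>V.subspace T\<close> by (auto simp: V.subspace_add mem_Times_iff)
    show "pscale c x \<in> S \<times> T" if "x \<in> S \<times> T" for c x
      using that \<open>V.subspace S\<close> \<open>V.subspace T\<close> by (auto simp: V.subspace_scale pscale_def mem_Times_iff)
  qed
  have spanZ: "V.span (Z \<union> B) = Z" using BZ(1) sZ(1) by (simp add: Un_absorb2)
  have lhs: "bar_infty_mult TYPE('f) q X
               (\<lambda>i. if i = 0 then {} else if i = 1 then X1 else if i = 2 then X1 \<union> X2 else topspace X) 3 3
             = dim_quot fscale Z I"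
    unfolding bar_infty_mult_def fimage_cycles_def
    by (simp add: spanZ[unfolded Z_def B_def] I_def Z12_def Z_def B_def)
  have h: "fhomology_dim TYPE('f) q X (topspace X) = dim_quot fscale Z B"
    by (simp add: fhomology_dim_def Z_def B_def)
  have h1: "fhomology_dim TYPE('f) q X X1 = dim_quot fscale Z1 B1"
    by (simp add: fhomology_dim_def Z1_def B1_def)
  have h2: "fhomology_dim TYPE('f) q X X2 = dim_quot fscale Z2 B2"
    by (simp add: fhomology_dim_def Z2_def B2_def)
  have g: "gamma_dim TYPE('f) q X X1 X2 =
      dim_quot pscale {u \<in> Z1 \<times> Z2. fst u - snd u \<in> B} (B1 \<times> B2)"
  proof -
    have "{u \<in> Z1 \<times> Z2. fst u - snd u \<in> B} = {(z1, z2). z1 \<in> Z1 \<and> z2 \<in> Z2 \<and> z1 - z2 \<in> B}"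
      by auto
    then show ?thesis by (simp add: gamma_dim_def Z1_def Z2_def B_def B1_def B2_def)
  qed
  have finZ: "fin_dim_quot fscale Z B"
    using assms(6) by (simp add: fhomology_findim_def Z_def B_def)
  have finZ1: "fin_dim_quot fscale Z1 B1"
    using assms(4) by (simp add: fhomology_findim_def Z1_def B1_def)
  have finZ2: "fin_dim_quot fscale Z2 B2"
    using assms(5) by (simp add: fhomology_findim_def Z2_def B2_def)
  have RN1: "dim_quot fscale Z B = dim_quot fscale I B + dim_quot fscale Z I"
  proof -
    note r = VV.rank_nullity_quot[OF V.linear_ident sZ(1) sB(1) BZ(1) sI _ finZ]
    have "{u \<in> Z. u \<in> I} = I" using IZ by blast
    moreover have "V.span ((\<lambda>x. x) ` Z \<union> I) = Z" using IZ sZ(1) by (simp add: Un_absorb2)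
    ultimately show ?thesis using r(3) BI by simp
  qed
  have lin1: "Vector_Spaces.linear fscale pscale (\<lambda>x. (x, 0::('a,'f) fchain))"
    unfolding Vector_Spaces.linear_iff using vs_fscale vs_pscale
    by (simp add: pscale_def fscale_def fun_eq_iff)
  have lin2: "Vector_Spaces.linear fscale pscale (\<lambda>y. (0::('a,'f) fchain, y))"
    unfolding Vector_Spaces.linear_iff using vs_fscale vs_pscale
    by (simp add: pscale_def fscale_def fun_eq_iff)
  have finP: "fin_dim_quot pscale (Z1 \<times> Z2) (B1 \<times> B2)"
  proof -
    obtain T1 where T1: "finite T1" "T1 \<subseteq> Z1" "Z1 \<subseteq> V.span (T1 \<union> B1)"
      using finZ1 unfolding fin_dim_quot_def by blast
    obtain T2 where T2: "finite T2" "T2 \<subseteq> Z2" "Z2 \<subseteq> V.span (T2 \<union> B2)"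
      using finZ2 unfolding fin_dim_quot_def by blast
    define T where "T = (\<lambda>x. (x, 0)) ` T1 \<union> (\<lambda>y. (0, y)) ` T2"
    have "finite T" using T1 T2 by (simp add: T_def)
    moreover have "T \<subseteq> Z1 \<times> Z2" using T1 T2 zero by (auto simp: T_def)
    moreover have "Z1 \<times> Z2 \<subseteq> P.span (T \<union> B1 \<times> B2)"
    proof
      fix z assume "z \<in> Z1 \<times> Z2"
      then obtain z1 z2 where z: "z = (z1, z2)" "z1 \<in> Z1" "z2 \<in> Z2" by blast
      have "(z1, 0) \<in> (\<lambda>x. (x, 0)) ` V.span (T1 \<union> B1)" using z T1 by blast
      hence "(z1, 0) \<in> P.span ((\<lambda>x. (x, 0)) ` (T1 \<union> B1))"
        by (simp add: VP.linear_span_image[OF lin1])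
      moreover have "(\<lambda>x. (x, 0)) ` (T1 \<union> B1) \<subseteq> T \<union> B1 \<times> B2" using zero by (auto simp: T_def)
      ultimately have a: "(z1, 0) \<in> P.span (T \<union> B1 \<times> B2)" using P.span_mono by blast
      have "(0, z2) \<in> (\<lambda>y. (0, y)) ` V.span (T2 \<union> B2)" using z T2 by blast
      hence "(0, z2) \<in> P.span ((\<lambda>y. (0, y)) ` (T2 \<union> B2))"
        by (simp add: VP.linear_span_image[OF lin2])
      moreover have "(\<lambda>y. (0, y)) ` (T2 \<union> B2) \<subseteq> T \<union> B1 \<times> B2" using zero by (auto simp: T_def)
      ultimately have b: "(0, z2) \<in> P.span (T \<union> B1 \<times> B2)" using P.span_mono by blast
      have "z = (z1, 0) + (0, z2)" using z by simp
      then show "z \<in> P.span (T \<union> B1 \<times> B2)" using P.span_add[OF a b] by simp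
    qed
    ultimately show ?thesis unfolding fin_dim_quot_def by blast
  qed
  have linD: "Vector_Spaces.linear pscale fscale (\<lambda>v::('a,'f) fchain \<times> ('a,'f) fchain. fst v - snd v)"
    unfolding Vector_Spaces.linear_iff using vs_fscale vs_pscale
    by (simp add: pscale_def fscale_def fun_eq_iff algebra_simps)
  have RN2: "dim_quot pscale (Z1 \<times> Z2) (B1 \<times> B2) =
      dim_quot pscale {u \<in> Z1 \<times> Z2. fst u - snd u \<in> B} (B1 \<times> B2) + dim_quot fscale I B"
  proof -
    have fW: "(\<lambda>v. fst v - snd v) ` (B1 \<times> B2) \<subseteq> B"
      using B1B sB(1) by (auto intro!: V.subspace_diff[OF sB(1)])
    note r = PV.rank_nullity_quot[OF linD prod_sub[OF sZ(2,3)] prod_sub[OF sB(2,3)] _ sB(1) fW finP]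
    have sub: "B1 \<times> B2 \<subseteq> Z1 \<times> Z2" using BZ by auto
    have "V.span ((\<lambda>v. fst v - snd v) ` (Z1 \<times> Z2) \<union> B) = I"
      unfolding I_def V.span_eq
    proof
      show "(\<lambda>v. fst v - snd v) ` (Z1 \<times> Z2) \<union> B \<subseteq> V.span (Z12 \<union> B)"
      proof
        fix x assume "x \<in> (\<lambda>v. fst v - snd v) ` (Z1 \<times> Z2) \<union> B"
        then consider "x \<in> B" | z1 z2 where "z1 \<in> Z1" "z2 \<in> Z2" "x = z1 - z2" by auto
        then show "x \<in> V.span (Z12 \<union> B)"
        proof cases
          case 1 then show ?thesis by (auto intro: V.span_base)
        next
          case 2
          have "z1 \<in> V.span (Z12 \<union> B)" "z2 \<in> V.span (Z12 \<union> B)"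
            using 2 Z1Z12 by (auto intro: V.span_base)
          then show ?thesis using 2 V.span_diff by simp
        qed
      qed
    next
      let ?D = "(\<lambda>v. fst v - snd v) ` (Z1 \<times> Z2) \<union> B"
      have z1: "Z1 \<subseteq> V.span ?D"
      proof
        fix z assume "z \<in> Z1"
        hence "z \<in> ?D" using zero by (auto intro!: image_eqI[of _ _ "(z, 0)"])
        thus "z \<in> V.span ?D" by (rule V.span_base)
      qed
      have z2: "Z2 \<subseteq> V.span ?D"
      proof
        fix z assume "z \<in> Z2"
        hence "- z \<in> ?D" using zero by (auto intro!: image_eqI[of _ _ "(0, z)"])
        hence "- (- z) \<in> V.span ?D" by (intro V.span_neg V.span_base)
        thus "z \<in> V.span ?D" by simp
      qed
      have "Z12 \<subseteq> V.span ?D"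
      proof
        fix z assume "z \<in> Z12"
        then obtain c1 c2 where c: "c1 \<in> Z1" "c2 \<in> Z2" "z = c1 + c2"
          using cycle_split[OF cl X12, of z q] unfolding Z12_def Z1_def Z2_def by blast
        then show "z \<in> V.span ?D" using z1 z2 V.span_add by blast
      qed
      moreover have "B \<subseteq> V.span ?D" by (auto intro: V.span_base)
      ultimately show "Z12 \<union> B \<subseteq> V.span ?D" by blast
    qed
    then show ?thesis using r(3) sub by simp
  qed
  have linF: "Vector_Spaces.linear pscale fscale (fst :: ('a,'f) fchain \<times> ('a,'f) fchain \<Rightarrow> _)"
    unfolding Vector_Spaces.linear_iff using vs_fscale vs_pscale
    by (simp add: pscale_def)
  have linS: "Vector_Spaces.linear pscale fscale (snd :: ('a,'f) fchain \<times> ('a,'f) fchain \<Rightarrow> _)"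
    unfolding Vector_Spaces.linear_iff using vs_fscale vs_pscale
    by (simp add: pscale_def)
  have RN3: "dim_quot pscale (Z1 \<times> Z2) (B1 \<times> B2) =
      dim_quot pscale (B1 \<times> Z2) (B1 \<times> B2) + dim_quot fscale Z1 B1"
    and fin3: "fin_dim_quot pscale (B1 \<times> Z2) (B1 \<times> B2)"
  proof -
    have sub: "B1 \<times> B2 \<subseteq> Z1 \<times> Z2" using BZ by auto
    have fW: "fst ` (B1 \<times> B2) \<subseteq> B1" by auto
    note r = PV.rank_nullity_quot[OF linF prod_sub[OF sZ(2,3)] prod_sub[OF sB(2,3)] sub sB(2) fW finP]
    have N: "{u \<in> Z1 \<times> Z2. fst u \<in> B1} = B1 \<times> Z2" using BZ by auto
    have "fst ` (Z1 \<times> Z2) = Z1" using zero by force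
    hence Im: "V.span (fst ` (Z1 \<times> Z2) \<union> B1) = Z1" using BZ sZ(2) by (simp add: Un_absorb2)
    show "dim_quot pscale (Z1 \<times> Z2) (B1 \<times> B2) =
      dim_quot pscale (B1 \<times> Z2) (B1 \<times> B2) + dim_quot fscale Z1 B1"
      using r(3) unfolding N Im .
    show "fin_dim_quot pscale (B1 \<times> Z2) (B1 \<times> B2)" using r(1) unfolding N .
  qed
  have RN4: "dim_quot pscale (B1 \<times> Z2) (B1 \<times> B2) = dim_quot fscale Z2 B2"
  proof -
    have sub: "B1 \<times> B2 \<subseteq> B1 \<times> Z2" using BZ by auto
    have fW: "snd ` (B1 \<times> B2) \<subseteq> B2" by auto
    note r = PV.rank_nullity_quot[OF linS prod_sub[OF sB(2) sZ(3)] prod_sub[OF sB(2,3)] sub sB(3) fW fin3]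
    have N: "{u \<in> B1 \<times> Z2. snd u \<in> B2} = B1 \<times> B2" using BZ(3) by auto
    have "snd ` (B1 \<times> Z2) = Z2" using zero by force
    hence Im: "V.span (snd ` (B1 \<times> Z2) \<union> B2) = Z2" using BZ sZ(3) by (simp add: Un_absorb2)
    have "dim_quot pscale (B1 \<times> B2) (B1 \<times> B2) = 0"
      by (rule P.dim_quot_self[OF prod_sub[OF sB(2,3)]])
    then show ?thesis using r(3) unfolding N Im by simp
  qed
  show ?thesis
    unfolding lhs h h1 h2 g using RN1 RN2 RN3 RN4 by linarith
qed


end
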